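(* Let $n$ and $k$ be positive integers. Then the posets $\widetilde{\mathrm{NC}}^{(2k)}(2n+1)$ and $\mathrm{NC}^{(2k)}(n;k)$ (defined in the context) are isomorphic.
   Context: For a positive integer $N$, a partition $\pi$ of $[N]=\{1,\dots,N\}$ is noncrossing if there are no $a<b<c<d$ with $a,c$ in one block and $b,d$ in a different block. All posets of partitions are ordered by refinement ($\pi\le\sigma$ if every block of $\sigma$ is a union of blocks of $\pi$). Let $m=k(2n+1)$ and let $\rho$ be the $180^\circ$ rotation of $[2m]$ arranged on a circle: $\rho(i)=i+m$ for $1\le i\le m$, $\rho(i)=i-m$ for $m<i\le 2m$. $\widetilde{\mathrm{NC}}^{(2k)}(2n+1)$ is the poset of noncrossing partitions of $[2k(2n+1)]$ all of whose block sizes are divisible by $2k$ and which are invariant under $\rho$ (i.e. $\rho(B)$ is a block whenever $B$ is). For integers $K,r$ with $0<r<K$, $\mathrm{NC}^{(K)}(n;r)$ is the poset of noncrossing partitions of $[Kn+r]$ in which the sizes of all but one of the blocks are divisible by $K$; here $K=2k$, $r=k$. *)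

theory Defs
  imports Main "HOL-Library.Disjoint_Sets"
begin

definition noncrossing :: "nat set set \<Rightarrow> bool" where
  "noncrossing P \<longleftrightarrow>
     \<not> (\<exists>a b c d B B'. a < b \<and> b < c \<and> c < d \<and> B \<in> P \<and> B' \<in> P \<and> B \<noteq> B' \<and>
                       a \<in> B \<and> c \<in> B \<and> b \<in> B' \<and> d \<in> B')"

definition refines :: "nat set set \<Rightarrow> nat set set \<Rightarrow> bool" where
  "refines \<pi> \<sigma> \<longleftrightarrow> (\<forall>B\<in>\<sigma>. \<exists>S. S \<subseteq> \<pi> \<and> B = \<Union>S)"

definition rot :: "nat \<Rightarrow> nat \<Rightarrow> nat" where
  "rot m i = (if i \<le> m then i + m else i - m)"

text \<open>The poset NC-tilde^(2k)(2n+1) (its underlying set; order is refines).\<close>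
definition NC_tilde :: "nat \<Rightarrow> nat \<Rightarrow> nat set set set" where
  "NC_tilde k n = (let m = k * (2 * n + 1) in
     {P. partition_on {1..2 * m} P \<and> noncrossing P \<and>
         (\<forall>B\<in>P. (2 * k) dvd card B) \<and> (\<forall>B\<in>P. rot m ` B \<in> P)})"

text \<open>The poset NC^(K)(n;r) (its underlying set; order is refines).\<close>
definition NC_r :: "nat \<Rightarrow> nat \<Rightarrow> nat \<Rightarrow> nat set set set" where
  "NC_r K n r = {P. partition_on {1..K * n + r} P \<and> noncrossing P \<and>
         (\<exists>B0\<in>P. \<forall>B\<in>P. B \<noteq> B0 \<longrightarrow> K dvd card B)}"

definition refinement_posets_iso :: "nat set set set \<Rightarrow> nat set set set \<Rightarrow> bool" where
  "refinement_posets_iso A B \<longleftrightarrow>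
     (\<exists>f. bij_betw f A B \<and> (\<forall>x\<in>A. \<forall>y\<in>A. refines x y \<longleftrightarrow> refines (f x) (f y)))"

end

theory Submission
  imports Defs "HOL-Library.Disjoint_Sets"
begin


definition cross :: "nat set \<Rightarrow> nat set \<Rightarrow> bool" where
 "cross X Y \<longleftrightarrow> (\<exists>a b c d. a<b \<and> b<c \<and> c<d \<and> a\<in>X \<and> c\<in>X \<and> b\<in>Y \<and> d\<in>Y)"

lemma noncrossing_cross: "noncrossing P \<longleftrightarrow> (\<forall>B\<in>P. \<forall>B'\<in>P. B \<noteq> B' \<longrightarrow> \<not> cross B B')"
proof
  assume nc: "noncrossing P"
  show "\<forall>B\<in>P. \<forall>B'\<in>P. B \<noteq> B' \<longrightarrow> \<not> cross B B'"
  proof (intro ballI impI notI)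
    fix B B' assume h: "B \<in> P" "B' \<in> P" "B \<noteq> B'" "cross B B'"
    then obtain a b c d where "a<b" "b<c" "c<d" "a\<in>B" "c\<in>B" "b\<in>B'" "d\<in>B'"
      unfolding cross_def by blast
    then show False using nc h unfolding noncrossing_def by blast
  qed
next
  assume H: "\<forall>B\<in>P. \<forall>B'\<in>P. B \<noteq> B' \<longrightarrow> \<not> cross B B'"
  show "noncrossing P" unfolding noncrossing_def
  proof
    assume "\<exists>a b c d B B'. a < b \<and> b < c \<and> c < d \<and> B \<in> P \<and> B' \<in> P \<and> B \<noteq> B' \<and>
                       a \<in> B \<and> c \<in> B \<and> b \<in> B' \<and> d \<in> B'"
    then obtain a b c d B B' where "a < b" "b < c" "c < d" "B \<in> P" "B' \<in> P" "B \<noteq> B'"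
                       "a \<in> B" "c \<in> B" "b \<in> B'" "d \<in> B'" by blast
    then have "cross B B'" unfolding cross_def by blast
    then show False using H \<open>B \<in> P\<close> \<open>B' \<in> P\<close> \<open>B \<noteq> B'\<close> by blast
  qed
qed

lemma cross_mono: "cross X Y \<Longrightarrow> X \<subseteq> X' \<Longrightarrow> Y \<subseteq> Y' \<Longrightarrow> cross X' Y'"
  unfolding cross_def by (elim exE conjE) (intro exI conjI, assumption+, auto)

lemma cross_shift:
  fixes h :: "nat \<Rightarrow> nat" and t :: nat
  assumes mono1: "\<And>x y. x \<in> D \<Longrightarrow> y \<in> D \<Longrightarrow> x < y \<Longrightarrow> y < t \<Longrightarrow> h x < h y"
  and mono2: "\<And>x y. x \<in> D \<Longrightarrow> y \<in> D \<Longrightarrow> x < y \<Longrightarrow> t \<le> x \<Longrightarrow> h x < h y"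
  and jump: "\<And>x y. x \<in> D \<Longrightarrow> y \<in> D \<Longrightarrow> x < t \<Longrightarrow> t \<le> y \<Longrightarrow> h y < h x"
  and XD: "X \<subseteq> D" and YD: "Y \<subseteq> D" and c: "cross X Y"
  shows "cross (h`X) (h`Y) \<or> cross (h`Y) (h`X)"
proof -
  obtain a b c d where o: "a<b" "b<c" "c<d" and m: "a\<in>X" "c\<in>X" "b\<in>Y" "d\<in>Y"
    using c unfolding cross_def by blast
  have D: "a \<in> D" "b \<in> D" "c \<in> D" "d \<in> D" using m XD YD by auto
  have im: "h a \<in> h`X" "h c \<in> h`X" "h b \<in> h`Y" "h d \<in> h`Y" using m by auto
  consider "d < t" | "c < t" "t \<le> d" | "b < t" "t \<le> c" | "a < t" "t \<le> b" | "t \<le> a"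
    using o by linarith
  then show ?thesis
  proof cases
    case 1
    then have "h a < h b" "h b < h c" "h c < h d" using mono1[OF D(1,2)] mono1[OF D(2,3)] mono1[OF D(3,4)] o by auto
    then show ?thesis using im unfolding cross_def by blast
  next
    case 2
    then have "h d < h a" "h a < h b" "h b < h c" using mono1[OF D(1,2)] mono1[OF D(2,3)] jump[OF D(1,4)] o by auto
    then show ?thesis using im unfolding cross_def by blast
  next
    case 3
    then have "h c < h d" "h d < h a" "h a < h b" using mono1[OF D(1,2)] mono2[OF D(3,4)] jump[OF D(1,4)] o by auto
    then show ?thesis using im unfolding cross_def by blast
  next
    case 4
    then have "h b < h c" "h c < h d" "h d < h a" using mono2[OF D(2,3)] mono2[OF D(3,4)] jump[OF D(1,4)] o by auto
    then show ?thesis using im unfolding cross_def by blast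
  next
    case 5
    then have "h a < h b" "h b < h c" "h c < h d" using mono2[OF D(1,2)] mono2[OF D(2,3)] mono2[OF D(3,4)] o by auto
    then show ?thesis using im unfolding cross_def by blast
  qed
qed

lemma card_Union_mod:
  assumes "finite P" "\<forall>B\<in>P. finite B" "disjoint P" "B0 \<in> P"
    "\<forall>B\<in>P. B \<noteq> B0 \<longrightarrow> d dvd card B"
  shows "card (\<Union>P) mod d = card B0 mod d"
proof -
  have "card (\<Union>P) = sum card P" using card_Union_disjoint assms by blast
  also have "\<dots> = card B0 + sum card (P - {B0})" using assms by (simp add: sum.remove)
  finally have e: "card (\<Union>P) = card B0 + sum card (P - {B0})" .
  have "d dvd sum card (P - {B0})" using assms by (intro dvd_sum) auto
  then show ?thesis using e by auto
qed

lemma card_Union_dvd: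
  assumes "finite P" "\<forall>B\<in>P. finite B" "disjoint P" "\<forall>B\<in>P. d dvd card B"
  shows "d dvd card (\<Union>P)"
proof -
  have "card (\<Union>P) = sum card P" using card_Union_disjoint assms by blast
  then show ?thesis using assms by (simp add: dvd_sum)
qed

lemma part_unique: "partition_on A P \<Longrightarrow> B \<in> P \<Longrightarrow> B' \<in> P \<Longrightarrow> x \<in> B \<Longrightarrow> x \<in> B' \<Longrightarrow> B = B'"
proof (rule ccontr)
  assume "partition_on A P" "B \<in> P" "B' \<in> P" "x \<in> B" "x \<in> B'" "B \<noteq> B'"
  moreover have "disjoint P" using \<open>partition_on A P\<close> by (rule partition_onD2)
  ultimately have "B \<inter> B' = {}" unfolding disjoint_def by blast
  then show False using \<open>x \<in> B\<close> \<open>x \<in> B'\<close> by blast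
qed

lemma part_sub: "partition_on A P \<Longrightarrow> B \<in> P \<Longrightarrow> B \<subseteq> A"
  using partition_onD1 by blast

lemma part_ne: "partition_on A P \<Longrightarrow> B \<in> P \<Longrightarrow> B \<noteq> {}"
  using partition_onD3 by blast

lemma part_cover: "partition_on A P \<Longrightarrow> x \<in> A \<Longrightarrow> \<exists>B\<in>P. x \<in> B"
  using partition_onD1 by blast

lemma refines_part:
  assumes "partition_on A P" "partition_on A Q"
  shows "refines P Q \<longleftrightarrow> (\<forall>B\<in>P. \<exists>B'\<in>Q. B \<subseteq> B')"
proof
  assume r: "refines P Q"
  show "\<forall>B\<in>P. \<exists>B'\<in>Q. B \<subseteq> B'"
  proof
    fix B assume B: "B \<in> P"
    obtain x where x: "x \<in> B" using part_ne[OF assms(1) B] by blast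
    then have "x \<in> A" using part_sub[OF assms(1) B] by blast
    then obtain B' where B': "B' \<in> Q" "x \<in> B'" using part_cover[OF assms(2)] by blast
    then obtain S where S: "S \<subseteq> P" "B' = \<Union>S" using r unfolding refines_def by blast
    then obtain G where G: "G \<in> S" "x \<in> G" using B' by auto
    then have "G \<in> P" using S by auto
    then have "G = B" using part_unique[OF assms(1) _ B(1)] G x by auto
    then show "\<exists>B'\<in>Q. B \<subseteq> B'" using G S B' by blast
  qed
next
  assume r: "\<forall>B\<in>P. \<exists>B'\<in>Q. B \<subseteq> B'"
  show "refines P Q" unfolding refines_def
  proof
    fix B' assume B': "B' \<in> Q"
    have "B' = \<Union>{B\<in>P. B \<subseteq> B'}"
    proof
      show "B' \<subseteq> \<Union>{B\<in>P. B \<subseteq> B'}"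
      proof
        fix x assume x: "x \<in> B'"
        then have "x \<in> A" using part_sub[OF assms(2) B'] by blast
        then obtain B where B: "B \<in> P" "x \<in> B" using part_cover[OF assms(1)] by blast
        then obtain B'' where "B'' \<in> Q" "B \<subseteq> B''" using r by blast
        then have "B'' = B'" using part_unique[OF assms(2)] B' x B by blast
        then show "x \<in> \<Union>{B\<in>P. B \<subseteq> B'}" using B \<open>B \<subseteq> B''\<close> by auto
      qed
    next
      show "\<Union>{B\<in>P. B \<subseteq> B'} \<subseteq> B'" by auto
    qed
    then show "\<exists>S\<subseteq>P. B' = \<Union>S" by (rule_tac x="{B\<in>P. B \<subseteq> B'}" in exI) auto
  qed
qed




definition pim :: "nat \<Rightarrow> nat \<Rightarrow> nat" where "pim m x = (if x \<le> m then x else x - m)"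
definition psi :: "nat \<Rightarrow> nat \<Rightarrow> nat \<Rightarrow> nat" where "psi m z x = (if x < z then x + m else x)"

definition TP :: "nat \<Rightarrow> nat set set \<Rightarrow> bool" where
  "TP m P \<longleftrightarrow> partition_on {1..2*m} P \<and> noncrossing P \<and> (\<forall>B\<in>P. rot m ` B \<in> P)"

definition fq :: "nat \<Rightarrow> nat set set \<Rightarrow> nat set set" where
  "fq m P = (image (pim m)) ` P"

lemma rot_range: "x \<in> {1..2*m} \<Longrightarrow> rot m x \<in> {1..2*m}"
  by (auto simp: rot_def)
lemma rot_rot: "x \<in> {1..2*m} \<Longrightarrow> rot m (rot m x) = x"
  by (auto simp: rot_def)
lemma pim_rot: "x \<in> {1..2*m} \<Longrightarrow> pim m (rot m x) = pim m x"
  by (auto simp: rot_def pim_def)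
lemma pim_range: "x \<in> {1..2*m} \<Longrightarrow> pim m x \<in> {1..m}"
  by (auto simp: pim_def)
lemma pim_eq: "x \<in> {1..2*m} \<Longrightarrow> y \<in> {1..2*m} \<Longrightarrow> pim m x = pim m y \<Longrightarrow> y = x \<or> y = rot m x"
  by (auto simp: pim_def rot_def split: if_splits)
lemma pim_psi: "x \<in> {1..m} \<Longrightarrow> 1 \<le> z \<Longrightarrow> pim m (psi m z x) = x"
  by (auto simp: pim_def psi_def)
lemma psi_pim: "x \<in> {1..2*m} \<Longrightarrow> 1 \<le> z \<Longrightarrow> z \<le> m \<Longrightarrow>
   psi m z (pim m x) = (if z \<le> x \<and> x < z + m then x else rot m x)"
  by (auto simp: pim_def psi_def rot_def)
lemma psi_range: "x \<in> {1..m} \<Longrightarrow> 1 \<le> z \<Longrightarrow> z \<le> m \<Longrightarrow> z \<le> psi m z x \<and> psi m z x < z + m"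
  by (auto simp: psi_def)
lemma psi_inj: "inj_on (psi m z) {1..m}"
  by (auto simp: inj_on_def psi_def split: if_splits)
lemma rot_inj: "inj_on (rot m) {1..2*m}"
  by (metis inj_on_def rot_rot)
lemma rot_rotB: "B \<subseteq> {1..2*m} \<Longrightarrow> rot m ` (rot m ` B) = B"
  by (force simp: image_image rot_rot intro: image_eqI)
lemma pim_img_rot: "B \<subseteq> {1..2*m} \<Longrightarrow> pim m ` (rot m ` B) = pim m ` B"
  by (force simp: image_image pim_rot intro: image_eqI)
lemma arc_flip: "y \<in> {1..2*m} \<Longrightarrow> y \<noteq> z \<Longrightarrow> y \<noteq> z + m \<Longrightarrow> 1 \<le> z \<Longrightarrow> z \<le> m \<Longrightarrow>
   (z < y \<and> y < z + m) \<longleftrightarrow> \<not> (z < rot m y \<and> rot m y < z + m)"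
  by (auto simp: rot_def)

lemma part_finite: "partition_on A P \<Longrightarrow> finite A \<Longrightarrow> finite P \<and> (\<forall>B\<in>P. finite B)"
  by (metis Pow_iff finite_Pow_iff finite_subset part_sub subsetI)

lemma rot_cross:
  assumes "X \<subseteq> {1..2*m}" "Y \<subseteq> {1..2*m}" "cross X Y"
  shows "cross (rot m ` X) (rot m ` Y) \<or> cross (rot m ` Y) (rot m ` X)"
  by (rule cross_shift[where D="{1..2*m}" and t="m+1"]) (use assms in \<open>auto simp: rot_def\<close>)

locale half = fixes m :: nat assumes mpos: "0 < m"
begin

lemma TP_part: "TP m P \<Longrightarrow> partition_on {1..2*m} P"
  by (simp add: TP_def)
lemma TP_sub: assumes "TP m P" "B \<in> P" shows "B \<subseteq> {1..2*m}"
  using part_sub[OF TP_part[OF assms(1)] assms(2)] .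
lemma TP_rot: "TP m P \<Longrightarrow> B \<in> P \<Longrightarrow> rot m ` B \<in> P"
  by (simp add: TP_def)
lemma TP_uniq: assumes "TP m P" "B \<in> P" "B' \<in> P" "x \<in> B" "x \<in> B'" shows "B = B'"
  using part_unique[OF TP_part[OF assms(1)] assms(2-5)] .
lemma TP_nc: assumes "TP m P" "B \<in> P" "B' \<in> P" "B \<noteq> B'" shows "\<not> cross B B'"
proof -
  have "noncrossing P" using assms(1) by (simp add: TP_def)
  then show ?thesis using assms(2-4) unfolding noncrossing_cross by blast
qed
lemma TP_ne: assumes "TP m P" "B \<in> P" shows "B \<noteq> {}"
  using part_ne[OF TP_part[OF assms(1)] assms(2)] .
lemma TP_fin: assumes "TP m P" shows "finite P \<and> (\<forall>B\<in>P. finite B)"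
  using part_finite[OF TP_part[OF assms(1)]] by simp

lemma central_low:
  assumes "TP m P" "Z \<in> P" "rot m ` Z = Z"
  shows "\<exists>z\<in>Z. 1 \<le> z \<and> z \<le> m \<and> z + m \<in> Z"
proof -
  obtain x where x: "x \<in> Z" using TP_ne assms by blast
  have xr: "x \<in> {1..2*m}" using TP_sub assms x by blast
  have rx: "rot m x \<in> Z" using assms(3) x by blast
  show ?thesis
  proof (cases "x \<le> m")
    case True
    then show ?thesis using x rx xr by (auto simp: rot_def)
  next
    case False
    then have "rot m x = x - m" by (simp add: rot_def)
    then show ?thesis using x rx xr False by (intro bexI[of _ "x - m"]) auto
  qed
qed

lemma arc1:
  assumes "TP m P" "Z \<in> P" "z \<in> Z" "z + m \<in> Z" "B \<in> P" "B \<noteq> Z" "x \<in> B" "y \<in> B"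
    "z < x" "x < z + m"
  shows "z < y \<and> y < z + m"
proof (rule ccontr)
  assume n: "\<not> (z < y \<and> y < z + m)"
  have "y \<noteq> z" "y \<noteq> z + m" using TP_uniq[OF assms(1) assms(2) assms(5)] assms by blast+
  then have "y < z \<or> z + m < y" using n by auto
  then show False
  proof
    assume "y < z"
    then have "cross B Z" unfolding cross_def using assms by blast
    then show False using TP_nc assms by blast
  next
    assume "z + m < y"
    then have "cross Z B" unfolding cross_def using assms by blast
    then show False using TP_nc assms by blast
  qed
qed

lemma arc:
  assumes "TP m P" "Z \<in> P" "z \<in> Z" "z + m \<in> Z" "B \<in> P" "B \<noteq> Z" "x \<in> B" "y \<in> B"
  shows "(z < x \<and> x < z + m) \<longleftrightarrow> (z < y \<and> y < z + m)"
  using arc1[OF assms(1-6) assms(7,8)] arc1[OF assms(1-6) assms(8,7)] by blast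

lemma central_unique:
  assumes "TP m P" "Z1 \<in> P" "Z2 \<in> P" "rot m ` Z1 = Z1" "rot m ` Z2 = Z2"
  shows "Z1 = Z2"
proof (rule ccontr)
  assume ne: "Z1 \<noteq> Z2"
  obtain z where z: "z \<in> Z1" "1 \<le> z" "z \<le> m" "z + m \<in> Z1" using central_low assms by blast
  obtain w where w: "w \<in> Z2" "1 \<le> w" "w \<le> m" "w + m \<in> Z2" using central_low assms by blast
  have "(z < w \<and> w < z + m) \<longleftrightarrow> (z < w + m \<and> w + m < z + m)"
    using arc[OF assms(1,2) z(1,4) assms(3) ne[symmetric] w(1,4)] .
  then have "w = z" using z w by auto
  then show False using ne z w TP_uniq[OF assms(1,2,3)] by blast
qed

lemma fq_part: assumes "TP m P" shows "partition_on {1..m} (fq m P)"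
proof (rule partition_onI)
  have "\<Union>P = {1..2*m}" using assms unfolding TP_def partition_on_def by blast
  then have "\<Union>(fq m P) = pim m ` {1..2*m}" unfolding fq_def by blast
  also have "\<dots> = {1..m}"
  proof
    show "pim m ` {1..2*m} \<subseteq> {1..m}" using pim_range by blast
    show "{1..m} \<subseteq> pim m ` {1..2*m}"
    proof
      fix x assume "x \<in> {1..m}"
      then have "pim m x = x" "x \<in> {1..2*m}" by (auto simp: pim_def)
      then show "x \<in> pim m ` {1..2*m}" by (metis image_eqI)
    qed
  qed
  finally show "\<Union>(fq m P) = {1..m}" .
next
  fix p q assume p: "p \<in> fq m P" and q: "q \<in> fq m P" and pq: "p \<noteq> q"
  obtain B where B: "B \<in> P" "p = pim m ` B" using p unfolding fq_def by blast
  obtain B' where B': "B' \<in> P" "q = pim m ` B'" using q unfolding fq_def by blast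
  show "disjnt p q" unfolding disjnt_def
  proof (rule ccontr)
    assume "p \<inter> q \<noteq> {}"
    then obtain a b where ab: "a \<in> B" "b \<in> B'" "pim m a = pim m b" using B B' by auto
    have ar: "a \<in> {1..2*m}" "b \<in> {1..2*m}" using TP_sub assms B B' ab by blast+
    from pim_eq[OF ar ab(3)] show False
    proof
      assume "b = a" then have "B = B'" using TP_uniq assms B B' ab by blast
      then show False using pq B B' by blast
    next
      assume "b = rot m a"
      then have "b \<in> rot m ` B" using ab by blast
      then have "B' = rot m ` B" using TP_uniq[OF assms B'(1) TP_rot[OF assms B(1)]] ab by blast
      then have "q = p" using B B' pim_img_rot TP_sub assms by metis
      then show False using pq by blast
    qed
  qed
next
  show "{} \<notin> fq m P" using TP_ne assms unfolding fq_def by blast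
qed

lemma card_noncentral:
  assumes "TP m P" "B \<in> P" "rot m ` B \<noteq> B"
  shows "card (pim m ` B) = card B"
proof -
  have "inj_on (pim m) B"
  proof (rule inj_onI)
    fix a b assume ab: "a \<in> B" "b \<in> B" "pim m a = pim m b"
    have ar: "a \<in> {1..2*m}" "b \<in> {1..2*m}" using TP_sub assms ab by blast+
    show "a = b"
    proof (rule ccontr)
      assume "a \<noteq> b"
      then have "b = rot m a" using pim_eq[OF ar ab(3)] by auto
      then have "b \<in> rot m ` B" using ab by blast
      then have "rot m ` B = B" using TP_uniq[OF assms(1) TP_rot[OF assms(1,2)] assms(2)] ab by blast
      then show False using assms by blast
    qed
  qed
  then show ?thesis by (simp add: card_image)
qed

lemma central_exists:
  assumes "TP m P" "\<forall>B\<in>P. (2*k) dvd card B" "m = k * (2*n+1)" "0 < k"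
  shows "\<exists>Z\<in>P. rot m ` Z = Z"
proof (rule ccontr)
  assume "\<not> ?thesis"
  then have "\<forall>C\<in>fq m P. (2*k) dvd card C"
    using card_noncentral[OF assms(1)] assms(2) unfolding fq_def by auto
  moreover have fp: "partition_on {1..m} (fq m P)" using fq_part assms by blast
  ultimately have "(2*k) dvd card (\<Union>(fq m P))"
    using card_Union_dvd part_finite[OF fp] partition_onD2[OF fp] by blast
  moreover have "\<Union>(fq m P) = {1..m}" using partition_onD1[OF fp] by simp
  ultimately have dm: "(2*k) dvd m" by simp
  have e: "m = 2*k*n + k" using assms(3) by (simp add: algebra_simps)
  have "(2*k) dvd (2*k*n + k)" using dm e by simp
  then have "(2*k) dvd k" using dvd_add_right_iff[of "2*k" "2*k*n" k] by simp
  then have "2*k \<le> k" using assms(4) dvd_imp_le by blast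
  then show False using assms(4) by simp
qed

end




context half begin

lemma psi_block:
  assumes P: "TP m P" and Z: "Z \<in> P" "rot m ` Z = Z" and z: "z \<in> Z" "1 \<le> z" "z \<le> m" "z + m \<in> Z"
    and B: "B \<in> P"
  shows "\<exists>G\<in>P. psi m z ` (pim m ` B) \<subseteq> G \<and> pim m ` G = pim m ` B"
proof (cases "B = Z")
  case True
  have "psi m z ` (pim m ` Z) \<subseteq> Z"
  proof
    fix y assume "y \<in> psi m z ` (pim m ` Z)"
    then obtain x where x: "x \<in> Z" "y = psi m z (pim m x)" by blast
    have xr: "x \<in> {1..2*m}" using TP_sub P Z x by blast
    have "rot m x \<in> Z" using Z x by blast
    then show "y \<in> Z" using x psi_pim[OF xr z(2,3)] by (auto split: if_splits)
  qed
  then show ?thesis using True Z by blast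
next
  case False
  obtain x0 where x0: "x0 \<in> B" using TP_ne P B by blast
  have nz: "\<And>x. x \<in> B \<Longrightarrow> x \<noteq> z \<and> x \<noteq> z + m" using TP_uniq[OF P B Z(1)] z False by blast
  show ?thesis
  proof (cases "z < x0 \<and> x0 < z + m")
    case True
    have "psi m z ` (pim m ` B) \<subseteq> B"
    proof
      fix y assume "y \<in> psi m z ` (pim m ` B)"
      then obtain x where x: "x \<in> B" "y = psi m z (pim m x)" by blast
      have xr: "x \<in> {1..2*m}" using TP_sub P B x by blast
      have "z < x \<and> x < z + m" using arc[OF P Z(1) z(1,4) B False x0 x(1)] True by blast
      then show "y \<in> B" using x psi_pim[OF xr z(2,3)] by auto
    qed
    then show ?thesis using B by blast
  next
    case F: False
    have "psi m z ` (pim m ` B) \<subseteq> rot m ` B"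
    proof
      fix y assume "y \<in> psi m z ` (pim m ` B)"
      then obtain x where x: "x \<in> B" "y = psi m z (pim m x)" by blast
      have xr: "x \<in> {1..2*m}" using TP_sub P B x by blast
      have "\<not> (z < x \<and> x < z + m)" using arc[OF P Z(1) z(1,4) B False x0 x(1)] F by blast
      then have "\<not> (z \<le> x \<and> x < z + m)" using nz[OF x(1)] by auto
      then show "y \<in> rot m ` B" using x psi_pim[OF xr z(2,3)] by auto
    qed
    moreover have "pim m ` (rot m ` B) = pim m ` B" using pim_img_rot TP_sub P B by blast
    ultimately show ?thesis using TP_rot[OF P B] by blast
  qed
qed

lemma fq_nc:
  assumes P: "TP m P" and Z: "Z \<in> P" "rot m ` Z = Z"
  shows "noncrossing (fq m P)"
  unfolding noncrossing_cross
proof (intro ballI impI)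
  obtain z where z: "z \<in> Z" "1 \<le> z" "z \<le> m" "z + m \<in> Z" using central_low P Z by blast
  fix p q assume p: "p \<in> fq m P" and q: "q \<in> fq m P" and pq: "p \<noteq> q"
  obtain B1 where B1: "B1 \<in> P" "p = pim m ` B1" using p unfolding fq_def by blast
  obtain B2 where B2: "B2 \<in> P" "q = pim m ` B2" using q unfolding fq_def by blast
  obtain G1 where G1: "G1 \<in> P" "psi m z ` p \<subseteq> G1" "pim m ` G1 = p"
    using psi_block[OF P Z z B1(1)] B1 by auto
  obtain G2 where G2: "G2 \<in> P" "psi m z ` q \<subseteq> G2" "pim m ` G2 = q"
    using psi_block[OF P Z z B2(1)] B2 by auto
  have G12: "G1 \<noteq> G2" using G1 G2 pq by blast
  have fp: "partition_on {1..m} (fq m P)" using fq_part P by blast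
  have sub: "p \<subseteq> {1..m}" "q \<subseteq> {1..m}" using part_sub[OF fp] p q by blast+
  show "\<not> cross p q"
  proof
    assume c: "cross p q"
    have h1: "\<And>x y. x \<in> {1..m} \<Longrightarrow> y \<in> {1..m} \<Longrightarrow> x < y \<Longrightarrow> y < z \<Longrightarrow> psi m z x < psi m z y"
      by (simp add: psi_def)
    have h2: "\<And>x y. x \<in> {1..m} \<Longrightarrow> y \<in> {1..m} \<Longrightarrow> x < y \<Longrightarrow> z \<le> x \<Longrightarrow> psi m z x < psi m z y"
      by (simp add: psi_def)
    have h3: "\<And>x y. x \<in> {1..m} \<Longrightarrow> y \<in> {1..m} \<Longrightarrow> x < z \<Longrightarrow> z \<le> y \<Longrightarrow> psi m z y < psi m z x"
      by (auto simp: psi_def)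
    have "cross (psi m z ` p) (psi m z ` q) \<or> cross (psi m z ` q) (psi m z ` p)"
      by (rule cross_shift[OF h1 h2 h3 sub c])
    then have "cross G1 G2 \<or> cross G2 G1" using cross_mono G1(2) G2(2) by blast
    then show False using TP_nc[OF P G1(1) G2(1) G12] TP_nc[OF P G2(1) G1(1) G12[symmetric]] by blast
  qed
qed

lemma fq_NCr:
  assumes P: "TP m P" and dv: "\<forall>B\<in>P. (2*k) dvd card B" and mk: "m = k * (2*n+1)" and k: "0 < k"
  shows "fq m P \<in> NC_r (2*k) n k"
proof -
  obtain Z where Z: "Z \<in> P" "rot m ` Z = Z" using central_exists[OF P dv mk k] by blast
  have e: "2 * k * n + k = m" using mk by (simp add: algebra_simps)
  have "\<forall>C\<in>fq m P. C \<noteq> pim m ` Z \<longrightarrow> (2*k) dvd card C"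
  proof (intro ballI impI)
    fix C assume C: "C \<in> fq m P" "C \<noteq> pim m ` Z"
    obtain B where B: "B \<in> P" "C = pim m ` B" using C unfolding fq_def by blast
    have "rot m ` B \<noteq> B" using central_unique[OF P B(1) Z(1) _ Z(2)] B C by blast
    then show "(2*k) dvd card C" using card_noncentral[OF P B(1)] B dv by simp
  qed
  moreover have "pim m ` Z \<in> fq m P" using Z unfolding fq_def by blast
  ultimately show ?thesis unfolding NC_r_def using e fq_part[OF P] fq_nc[OF P Z] by auto
qed

lemma fq_mono:
  assumes "refines P P'" shows "refines (fq m P) (fq m P')"
  unfolding refines_def
proof
  fix C assume "C \<in> fq m P'"
  then obtain G where G: "G \<in> P'" "C = pim m ` G" unfolding fq_def by blast
  then obtain S where S: "S \<subseteq> P" "G = \<Union>S" using assms unfolding refines_def by blast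
  have "C = \<Union>(image (pim m) ` S)" using G S by blast
  moreover have "image (pim m) ` S \<subseteq> fq m P" using S unfolding fq_def by blast
  ultimately show "\<exists>S\<subseteq>fq m P. C = \<Union>S" by blast
qed

lemma central_card:
  assumes P: "TP m P" and dv: "\<forall>B\<in>P. (2*k) dvd card B" and mk: "m = k * (2*n+1)" and k: "0 < k"
    and Z: "Z \<in> P" "rot m ` Z = Z"
  shows "card (pim m ` Z) mod (2*k) = k"
proof -
  have fp: "partition_on {1..m} (fq m P)" using fq_part P by blast
  have "\<forall>C\<in>fq m P. C \<noteq> pim m ` Z \<longrightarrow> (2*k) dvd card C"
  proof (intro ballI impI)
    fix C assume C: "C \<in> fq m P" "C \<noteq> pim m ` Z"
    obtain B where B: "B \<in> P" "C = pim m ` B" using C unfolding fq_def by blast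
    have "rot m ` B \<noteq> B" using central_unique[OF P B(1) Z(1) _ Z(2)] B C by blast
    then show "(2*k) dvd card C" using card_noncentral[OF P B(1)] B dv by simp
  qed
  moreover have "pim m ` Z \<in> fq m P" using Z unfolding fq_def by blast
  ultimately have "card (\<Union>(fq m P)) mod (2*k) = card (pim m ` Z) mod (2*k)"
    using card_Union_mod part_finite[OF fp] partition_onD2[OF fp] by blast
  moreover have "\<Union>(fq m P) = {1..m}" using partition_onD1[OF fp] by simp
  ultimately have "card (pim m ` Z) mod (2*k) = m mod (2*k)" by simp
  also have "m mod (2*k) = k"
  proof -
    have "m = k + n * (2*k)" using mk by (simp add: algebra_simps)
    then have "m mod (2*k) = k mod (2*k)" by simp
    also have "\<dots> = k" using k by simp
    finally show ?thesis .
  qed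
  finally show ?thesis .
qed

end



lemma disjoint_subset': "disjoint P \<Longrightarrow> S \<subseteq> P \<Longrightarrow> disjoint S"
  unfolding disjoint_def by blast

context half begin

lemma hlift:
  assumes P: "TP m P" and G: "G \<in> P" and x: "x \<in> {1..2*m}" and px: "pim m x \<in> pim m ` G"
  shows "x \<in> G \<or> x \<in> rot m ` G"
proof -
  obtain y where y: "y \<in> G" "pim m x = pim m y" using px by blast
  have yr: "y \<in> {1..2*m}" using TP_sub[OF P G] y by blast
  have "x = y \<or> x = rot m y" using pim_eq[OF yr x] y by simp
  then show ?thesis using y by blast
qed

lemma fq_reflect:
  assumes P: "TP m P" and P': "TP m P'" and dv: "\<forall>B\<in>P. (2*k) dvd card B"
    and dv': "\<forall>B\<in>P'. (2*k) dvd card B" and mk: "m = k * (2*n+1)" and k: "0 < k"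
    and r: "refines (fq m P) (fq m P')"
  shows "refines P P'"
proof -
  obtain Z where Z: "Z \<in> P" "rot m ` Z = Z" using central_exists[OF P dv mk k] by blast
  obtain Z' where Z': "Z' \<in> P'" "rot m ` Z' = Z'" using central_exists[OF P' dv' mk k] by blast
  have fp: "partition_on {1..m} (fq m P)" using fq_part P by blast
  have fp': "partition_on {1..m} (fq m P')" using fq_part P' by blast
  have rp: "\<forall>C\<in>fq m P. \<exists>C'\<in>fq m P'. C \<subseteq> C'" using refines_part[OF fp fp'] r by blast
  have pZ: "pim m ` Z \<in> fq m P" using Z unfolding fq_def by blast
  have ZZ': "Z \<subseteq> Z'"
  proof -
    obtain C' where C': "C' \<in> fq m P'" "pim m ` Z \<subseteq> C'" using rp pZ by blast
    obtain G where G: "G \<in> P'" "C' = pim m ` G" using C'(1) unfolding fq_def by blast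
    have Gc: "rot m ` G = G"
    proof (rule ccontr)
      assume nc: "rot m ` G \<noteq> G"
      have "\<exists>S. S \<subseteq> fq m P \<and> C' = \<Union>S" using r C'(1) unfolding refines_def by blast
      then obtain S where S1: "S \<subseteq> fq m P" "C' = \<Union>S" by blast
      have S: "S \<subseteq> fq m P" "pim m ` G = \<Union>S" using S1 G(2) by simp_all
      have "pim m ` Z \<in> S"
      proof -
        obtain x where "x \<in> Z" using TP_ne[OF P Z(1)] by blast
        then have "pim m x \<in> pim m ` Z" by blast
        then have "pim m x \<in> C'" using C'(2) by blast
        then have "pim m x \<in> \<Union>S" using S1(2) by simp
        then obtain T where T: "T \<in> S" "pim m x \<in> T" by blast
        have "T = pim m ` Z" using part_unique[OF fp _ pZ T(2)] T S(1) \<open>x \<in> Z\<close> by blast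
        then show ?thesis using T by blast
      qed
      moreover have dT: "\<forall>T\<in>S. T \<noteq> pim m ` Z \<longrightarrow> (2*k) dvd card T"
      proof (intro ballI impI)
        fix T assume T: "T \<in> S" "T \<noteq> pim m ` Z"
        have "T \<in> fq m P" using T S(1) by blast
        then obtain B where B: "B \<in> P" "T = pim m ` B" unfolding fq_def by blast
        have "rot m ` B \<noteq> B"
        proof
          assume "rot m ` B = B"
          then have "B = Z" using central_unique[OF P B(1) Z(1) _ Z(2)] by simp
          then show False using T B by simp
        qed
        then show "(2*k) dvd card T" using card_noncentral[OF P B(1)] B dv by simp
      qed
      moreover have "finite S" using part_finite[OF fp] S(1) finite_subset by auto
      moreover have "\<forall>T\<in>S. finite T" using part_finite[OF fp] S(1) by auto
      moreover have "disjoint S" using disjoint_subset'[OF partition_onD2[OF fp] S(1)] .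
      ultimately have "card (\<Union>S) mod (2*k) = card (pim m ` Z) mod (2*k)"
        by (intro card_Union_mod)
      also have "\<dots> = k" using central_card[OF P dv mk k Z] .
      finally have "card G mod (2*k) = k" using S(2) card_noncentral[OF P' G(1) nc] by simp
      moreover have "card G mod (2*k) = 0" using dv' G(1) by simp
      ultimately show False using k by simp
    qed
    have "G = Z'" using central_unique[OF P' G(1) Z'(1) Gc Z'(2)] .
    show "Z \<subseteq> Z'"
    proof
      fix x assume x: "x \<in> Z"
      have xr: "x \<in> {1..2*m}" using TP_sub[OF P Z(1)] x by blast
      have "pim m x \<in> C'" using x C'(2) by blast
      then have "pim m x \<in> pim m ` Z'" using G(2) \<open>G = Z'\<close> by simp
      then have "x \<in> Z' \<or> x \<in> rot m ` Z'" using hlift[OF P' Z'(1) xr] by blast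
      then show "x \<in> Z'" using Z'(2) by simp
    qed
  qed
  obtain z where z: "z \<in> Z" "1 \<le> z" "z \<le> m" "z + m \<in> Z" using central_low[OF P Z] by blast
  have z': "z \<in> Z'" "z + m \<in> Z'" using z ZZ' by blast+
  have "\<forall>B\<in>P. \<exists>B'\<in>P'. B \<subseteq> B'"
  proof
    fix B assume B: "B \<in> P"
    show "\<exists>B'\<in>P'. B \<subseteq> B'"
    proof (cases "B = Z")
      case True then show ?thesis using ZZ' Z' by blast
    next
      case BZ: False
      have pB: "pim m ` B \<in> fq m P" using B unfolding fq_def by blast
      obtain C' where C': "C' \<in> fq m P'" "pim m ` B \<subseteq> C'" using rp pB by blast
      obtain G where G: "G \<in> P'" "C' = pim m ` G" using C'(1) unfolding fq_def by blast
      have lift: "\<And>y. y \<in> B \<Longrightarrow> y \<in> G \<or> y \<in> rot m ` G"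
      proof -
        fix y assume y: "y \<in> B"
        have yr: "y \<in> {1..2*m}" using TP_sub[OF P B] y by blast
        have "pim m y \<in> C'" using y C'(2) by blast
        then have "pim m y \<in> pim m ` G" using G(2) by simp
        then show "y \<in> G \<or> y \<in> rot m ` G" using hlift[OF P' G(1) yr] by simp
      qed
      show ?thesis
      proof (cases "G = Z'")
        case True
        have "B \<subseteq> Z'"
        proof
          fix y assume "y \<in> B"
          then have "y \<in> G \<or> y \<in> rot m ` G" by (rule lift)
          then show "y \<in> Z'" using True Z'(2) by (elim disjE) simp_all
        qed
        then show ?thesis using Z' by blast
      next
        case GZ: False
        obtain x0 where x0: "x0 \<in> B" using TP_ne[OF P B] by blast
        have Gr: "rot m ` G \<in> P'" using TP_rot[OF P' G(1)] .
        have rrG: "rot m ` (rot m ` G) = G" using rot_rotB TP_sub[OF P' G(1)] by blast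
        have rGZ: "rot m ` G \<noteq> Z'"
        proof
          assume "rot m ` G = Z'"
          then have "rot m ` Z' = G" using rrG by simp
          then show False using GZ Z'(2) by simp
        qed
        have "\<exists>H. H \<in> P' \<and> H \<noteq> Z' \<and> x0 \<in> H \<and> (\<forall>y\<in>B. y \<in> H \<or> y \<in> rot m ` H)"
        proof (cases "x0 \<in> G")
          case True
          have l: "\<forall>y\<in>B. y \<in> G \<or> y \<in> rot m ` G" using lift by blast
          show ?thesis
            by (rule exI[of _ G], intro conjI, rule G(1), rule GZ, rule True, rule l)
        next
          case False
          have x0r: "x0 \<in> rot m ` G" using lift[OF x0] False by simp
          have l: "\<forall>y\<in>B. y \<in> rot m ` G \<or> y \<in> rot m ` (rot m ` G)"
          proof
            fix y assume "y \<in> B"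
            then have "y \<in> G \<or> y \<in> rot m ` G" by (rule lift)
            then show "y \<in> rot m ` G \<or> y \<in> rot m ` (rot m ` G)" unfolding rrG by (elim disjE) simp_all
          qed
          show ?thesis
            by (rule exI[of _ "rot m ` G"], intro conjI, rule Gr, rule rGZ, rule x0r, rule l)
        qed
        then obtain H where HA: "H \<in> P' \<and> H \<noteq> Z' \<and> x0 \<in> H \<and> (\<forall>y\<in>B. y \<in> H \<or> y \<in> rot m ` H)"
          by (rule exE)
        have H: "H \<in> P'" "H \<noteq> Z'" "x0 \<in> H" using HA by simp_all
        have HH: "\<And>y. y \<in> B \<Longrightarrow> y \<in> H \<or> y \<in> rot m ` H" using HA by simp
        have rrH: "rot m ` (rot m ` H) = H" using rot_rotB TP_sub[OF P' H(1)] by blast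
        have "B \<subseteq> H"
        proof
          fix y assume y: "y \<in> B"
          show "y \<in> H"
          proof (rule ccontr)
            assume yH: "y \<notin> H"
            then have "y \<in> rot m ` H" using HH y by blast
            then have ry: "rot m y \<in> H" using rrH by blast
            have yr: "y \<in> {1..2*m}" using TP_sub[OF P B] y by blast
            have ynz: "y \<noteq> z" "y \<noteq> z + m" using TP_uniq[OF P B Z(1)] y z BZ by blast+
            have a1: "(z < x0 \<and> x0 < z + m) \<longleftrightarrow> (z < y \<and> y < z + m)"
              using arc[OF P Z(1) z(1,4) B BZ x0 y] .
            have a2: "(z < x0 \<and> x0 < z + m) \<longleftrightarrow> (z < rot m y \<and> rot m y < z + m)"
              using arc[OF P' Z'(1) z' H(1,2) H(3) ry] .
            show False using arc_flip[OF yr ynz z(2,3)] a1 a2 by blast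
          qed
        qed
        then show ?thesis using H by blast
      qed
    qed
  qed
  then show ?thesis using refines_part[OF TP_part[OF P] TP_part[OF P']] by blast
qed

end



locale inv = half +
  fixes Q :: "nat set set" and E :: "nat set"
  assumes Qp: "partition_on {1..m} Q" and Qnc: "noncrossing Q" and EQ: "E \<in> Q"
begin

definition z0 where "z0 = Min E"
definition Zb where "Zb = E \<union> rot m ` E"
definition Pa where "Pa C = psi m z0 ` C"
definition Pb where "Pb C = rot m ` Pa C"
definition gq where "gq = insert Zb (Pa ` (Q - {E}) \<union> Pb ` (Q - {E}))"

lemma Csub: "C \<in> Q \<Longrightarrow> C \<subseteq> {1..m}"
  using part_sub[OF Qp] by blast
lemma Cne: "C \<in> Q \<Longrightarrow> C \<noteq> {}"
  using part_ne[OF Qp] by blast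
lemma Quniq: "C \<in> Q \<Longrightarrow> C' \<in> Q \<Longrightarrow> x \<in> C \<Longrightarrow> x \<in> C' \<Longrightarrow> C = C'"
  using part_unique[OF Qp] by blast
lemma Efin: "finite E"
  using Csub[OF EQ] finite_subset by blast
lemma z0E: "z0 \<in> E"
  unfolding z0_def using Efin Cne[OF EQ] by (rule Min_in)
lemma z0r: "1 \<le> z0" "z0 \<le> m"
  using z0E Csub[OF EQ] by auto

lemma Pa_range:
  assumes C: "C \<in> Q" "C \<noteq> E" and y: "y \<in> Pa C"
  shows "z0 < y \<and> y < z0 + m"
proof -
  obtain x where x: "x \<in> C" "y = psi m z0 x" using y unfolding Pa_def by blast
  have xr: "x \<in> {1..m}" using Csub[OF C(1)] x by blast
  have r: "z0 \<le> y \<and> y < z0 + m" using psi_range[OF xr z0r] x by simp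
  have "y \<noteq> z0"
  proof
    assume "y = z0"
    then have "x = z0" using x xr z0r by (auto simp: psi_def split: if_splits)
    then have "C = E" using Quniq[OF C(1) EQ x(1)] z0E by simp
    then show False using C by simp
  qed
  then show ?thesis using r by simp
qed

lemma Pa_sub: "C \<in> Q \<Longrightarrow> Pa C \<subseteq> {1..2*m}"
proof
  fix y assume C: "C \<in> Q" and y: "y \<in> Pa C"
  obtain x where x: "x \<in> C" "y = psi m z0 x" using y unfolding Pa_def by blast
  have xr: "x \<in> {1..m}" using Csub[OF C] x by blast
  show "y \<in> {1..2*m}" using psi_range[OF xr z0r] x z0r by simp
qed

lemma Pb_sub: assumes "C \<in> Q" shows "Pb C \<subseteq> {1..2*m}"
  unfolding Pb_def image_subset_iff using Pa_sub[OF assms] rot_range by auto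

lemma Pb_range:
  assumes C: "C \<in> Q" "C \<noteq> E" and y: "y \<in> Pb C"
  shows "y < z0 \<or> z0 + m < y"
proof -
  obtain w where w: "w \<in> Pa C" "y = rot m w" using y unfolding Pb_def by (rule imageE)
  have "z0 < w \<and> w < z0 + m" using Pa_range[OF C w(1)] .
  then show ?thesis using w z0r by (auto simp: rot_def)
qed

lemma Zb_sub: "Zb \<subseteq> {1..2*m}"
  unfolding Zb_def using Csub[OF EQ] rot_range by auto

lemma pim_Pa: "C \<in> Q \<Longrightarrow> pim m ` Pa C = C"
proof -
  assume C: "C \<in> Q"
  have "pim m ` Pa C = (\<lambda>x. pim m (psi m z0 x)) ` C" unfolding Pa_def by (simp add: image_image)
  also have "\<dots> = (\<lambda>x. x) ` C"
    by (rule image_cong) (use Csub[OF C] pim_psi z0r in auto)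
  finally show ?thesis by simp
qed

lemma pim_Pb: "C \<in> Q \<Longrightarrow> pim m ` Pb C = C"
proof -
  assume C: "C \<in> Q"
  have "pim m ` Pb C = pim m ` Pa C" unfolding Pb_def
    using pim_img_rot[OF Pa_sub[OF C]] .
  then show ?thesis using pim_Pa[OF C] by simp
qed

lemma pim_E: "pim m ` E = E"
proof -
  have "pim m ` E = (\<lambda>x. x) ` E"
    by (rule image_cong) (use Csub[OF EQ] in \<open>auto simp: pim_def\<close>)
  then show ?thesis by simp
qed

lemma pim_Zb: "pim m ` Zb = E"
proof -
  have Es: "E \<subseteq> {1..2*m}" using Csub[OF EQ] by auto
  have "pim m ` (rot m ` E) = pim m ` E"
    using pim_img_rot[OF Es] .
  then show ?thesis unfolding Zb_def using pim_E by (simp add: image_Un)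
qed

lemma rot_Zb: "rot m ` Zb = Zb"
proof -
  have Es: "E \<subseteq> {1..2*m}" using Csub[OF EQ] by auto
  have "rot m ` (rot m ` E) = E" using rot_rotB[OF Es] .
  then show ?thesis unfolding Zb_def by (auto simp: image_Un)
qed

lemma rot_Pa: "rot m ` Pa C = Pb C"
  unfolding Pb_def ..

lemma rot_Pb: assumes "C \<in> Q" shows "rot m ` Pb C = Pa C"
  unfolding Pb_def using rot_rotB[OF Pa_sub[OF assms]] .

lemma gq_cases:
  assumes "X \<in> gq"
  obtains "X = Zb" | C where "C \<in> Q" "C \<noteq> E" "X = Pa C" | C where "C \<in> Q" "C \<noteq> E" "X = Pb C"
proof -
  have "X = Zb \<or> X \<in> Pa ` (Q - {E}) \<or> X \<in> Pb ` (Q - {E})" using assms by (simp add: gq_def)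
  then show ?thesis
  proof (elim disjE)
    assume "X \<in> Pa ` (Q - {E})"
    then obtain C where c: "C \<in> Q - {E}" "X = Pa C" by (rule imageE)
    show ?thesis by (rule that(2)[of C]) (use c in auto)
  next
    assume "X \<in> Pb ` (Q - {E})"
    then obtain C where c: "C \<in> Q - {E}" "X = Pb C" by (rule imageE)
    show ?thesis by (rule that(3)[of C]) (use c in auto)
  qed (use that(1) in simp)
qed

lemma gq_sub: "X \<in> gq \<Longrightarrow> X \<subseteq> {1..2*m}"
  by (erule gq_cases) (use Zb_sub Pa_sub Pb_sub in auto)

lemma gq_lab: "X \<in> gq \<Longrightarrow> pim m ` X \<in> Q"
  by (erule gq_cases) (use pim_Zb EQ pim_Pa pim_Pb in auto)

lemma Zb_win:
  assumes x: "x \<in> Zb" "z0 \<le> x" "x < z0 + m"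
  shows "x \<in> psi m z0 ` E"
proof -
  have xr: "x \<in> {1..2*m}" using Zb_sub x by blast
  have "pim m x \<in> E" using pim_Zb x(1) by blast
  moreover have "psi m z0 (pim m x) = x" using psi_pim[OF xr z0r] x by simp
  ultimately show ?thesis by (metis image_eqI)
qed

end



context inv begin

lemma gq_uniq:
  assumes X: "X \<in> gq" and Y: "Y \<in> gq" and x: "x \<in> X" "x \<in> Y"
  shows "X = Y"
proof -
  have lab: "pim m ` X = pim m ` Y"
    using Quniq[OF gq_lab[OF X] gq_lab[OF Y]] x by blast
  have win_Pa: "\<And>C. C \<in> Q \<Longrightarrow> C \<noteq> E \<Longrightarrow> x \<in> Pa C \<Longrightarrow> z0 < x \<and> x < z0 + m"
    using Pa_range by blast
  have win_Pb: "\<And>C. C \<in> Q \<Longrightarrow> C \<noteq> E \<Longrightarrow> x \<in> Pb C \<Longrightarrow> x < z0 \<or> z0 + m < x"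
    using Pb_range by blast
  show ?thesis
  proof (cases rule: gq_cases[OF X])
    case 1
    then show ?thesis
    proof (cases rule: gq_cases[OF Y])
      case 1 then show ?thesis using \<open>X = Zb\<close> by simp
    next
      case (2 C) then show ?thesis using \<open>X = Zb\<close> lab pim_Zb pim_Pa by simp
    next
      case (3 C) then show ?thesis using \<open>X = Zb\<close> lab pim_Zb pim_Pb by simp
    qed
  next
    case (2 C)
    then show ?thesis
    proof (cases rule: gq_cases[OF Y])
      case 1 then show ?thesis using 2 lab pim_Zb pim_Pa by simp
    next
      case (2 C') then show ?thesis using \<open>X = Pa C\<close> \<open>C \<in> Q\<close> lab pim_Pa by simp
    next
      case (3 C')
      have "z0 < x \<and> x < z0 + m" using win_Pa 2 x by simp
      moreover have "x < z0 \<or> z0 + m < x" using win_Pb 3 x by simp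
      ultimately show ?thesis by simp
    qed
  next
    case (3 C)
    then show ?thesis
    proof (cases rule: gq_cases[OF Y])
      case 1 then show ?thesis using 3 lab pim_Zb pim_Pb by simp
    next
      case (2 C')
      have "z0 < x \<and> x < z0 + m" using win_Pa 2 x by simp
      moreover have "x < z0 \<or> z0 + m < x" using win_Pb 3 x by simp
      ultimately show ?thesis by simp
    next
      case (3 C') then show ?thesis using \<open>X = Pb C\<close> \<open>C \<in> Q\<close> lab pim_Pb by simp
    qed
  qed
qed

lemma gq_cover: "\<Union>gq = {1..2*m}"
proof
  show "\<Union>gq \<subseteq> {1..2*m}" using gq_sub by blast
next
  show "{1..2*m} \<subseteq> \<Union>gq"
  proof
    fix x assume xr: "x \<in> {1..2*m}"
    have "pim m x \<in> {1..m}" using pim_range[OF xr] .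
    then obtain C where C: "C \<in> Q" "pim m x \<in> C" using part_cover[OF Qp] by blast
    show "x \<in> \<Union>gq"
    proof (cases "C = E")
      case True
      have "x \<in> Zb"
      proof (cases "x \<le> m")
        case True
        then have "pim m x = x" by (simp add: pim_def)
        then show ?thesis using C \<open>C = E\<close> unfolding Zb_def by simp
      next
        case False
        then have "rot m x = pim m x" by (simp add: pim_def rot_def)
        then have "rot m x \<in> E" using C \<open>C = E\<close> by simp
        then have "rot m (rot m x) \<in> rot m ` E" by (rule imageI)
        then show ?thesis using rot_rot[OF xr] unfolding Zb_def by simp
      qed
      moreover have "Zb \<in> gq" unfolding gq_def by simp
      ultimately show ?thesis by blast
    next
      case False
      have inPa: "psi m z0 (pim m x) \<in> Pa C" unfolding Pa_def using C(2) by (rule imageI)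
      have PaC: "Pa C \<in> gq" unfolding gq_def using C(1) False by simp
      have PbC: "Pb C \<in> gq" unfolding gq_def using C(1) False by simp
      show ?thesis
      proof (cases "z0 \<le> x \<and> x < z0 + m")
        case True
        then have "x \<in> Pa C" using inPa psi_pim[OF xr z0r] by simp
        then show ?thesis using PaC by blast
      next
        case F: False
        then have "rot m x \<in> Pa C" using inPa psi_pim[OF xr z0r] F by simp
        then have "rot m (rot m x) \<in> Pb C" unfolding Pb_def by (rule imageI)
        then have "x \<in> Pb C" using rot_rot[OF xr] by simp
        then show ?thesis using PbC by blast
      qed
    qed
  qed
qed

lemma gq_part: "partition_on {1..2*m} gq"
proof (rule partition_onI)
  show "\<Union>gq = {1..2*m}" by (rule gq_cover)
next
  fix p q assume "p \<in> gq" "q \<in> gq" "p \<noteq> q"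
  then show "disjnt p q" unfolding disjnt_def using gq_uniq by blast
next
  have "Zb \<noteq> {}" unfolding Zb_def using z0E by blast
  moreover have "\<And>C. C \<in> Q \<Longrightarrow> Pa C \<noteq> {}" unfolding Pa_def using Cne by simp
  moreover have "\<And>C. C \<in> Q \<Longrightarrow> Pb C \<noteq> {}" unfolding Pb_def Pa_def using Cne by simp
  ultimately show "{} \<notin> gq" unfolding gq_def by auto
qed

lemma gq_rot: "X \<in> gq \<Longrightarrow> rot m ` X \<in> gq"
proof (erule gq_cases)
  assume "X = Zb" then show ?thesis using rot_Zb unfolding gq_def by simp
next
  fix C assume "C \<in> Q" "C \<noteq> E" "X = Pa C"
  then show ?thesis using rot_Pa unfolding gq_def by simp
next
  fix C assume "C \<in> Q" "C \<noteq> E" "X = Pb C"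
  then show ?thesis using rot_Pb unfolding gq_def by simp
qed

lemma card_Pa: "C \<in> Q \<Longrightarrow> card (Pa C) = card C"
  unfolding Pa_def using card_image inj_on_subset[OF psi_inj Csub] by blast

lemma card_Pb: "C \<in> Q \<Longrightarrow> card (Pb C) = card C"
  unfolding Pb_def using card_image inj_on_subset[OF rot_inj Pa_sub] card_Pa by metis

lemma card_Zb: "card Zb = 2 * card E"
proof -
  have Es: "E \<subseteq> {1..2*m}" using Csub[OF EQ] by auto
  have c: "card (rot m ` E) = card E" using card_image inj_on_subset[OF rot_inj Es] by blast
  have Eb: "\<forall>x\<in>E. 1 \<le> x \<and> x \<le> m" using Csub[OF EQ] by auto
  have d: "E \<inter> rot m ` E = {}"
  proof (rule ccontr)
    assume "E \<inter> rot m ` E \<noteq> {}"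
    then obtain x y where xy: "x \<in> E" "y \<in> E" "x = rot m y" by blast
    have "1 \<le> x \<and> x \<le> m" "1 \<le> y \<and> y \<le> m" using Eb xy by auto
    then show False using xy(3) by (auto simp: rot_def split: if_splits)
  qed
  have "finite (rot m ` E)" using Efin by simp
  then have "card Zb = card E + card (rot m ` E)" unfolding Zb_def using d Efin card_Un_disjoint by blast
  then show ?thesis using c by simp
qed

lemma fq_gq: "fq m gq = Q"
proof -
  have "fq m gq = insert (pim m ` Zb) ((\<lambda>C. pim m ` Pa C) ` (Q - {E}) \<union> (\<lambda>C. pim m ` Pb C) ` (Q - {E}))"
    unfolding fq_def gq_def by (simp add: image_Un image_image)
  also have "(\<lambda>C. pim m ` Pa C) ` (Q - {E}) = (\<lambda>C. C) ` (Q - {E})"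
    by (rule image_cong) (simp_all add: pim_Pa)
  also have "(\<lambda>C. pim m ` Pb C) ` (Q - {E}) = (\<lambda>C. C) ` (Q - {E})"
    by (rule image_cong) (simp_all add: pim_Pb)
  finally show ?thesis using pim_Zb EQ by auto
qed

end



context inv begin

lemma Q_nc: "C \<in> Q \<Longrightarrow> C' \<in> Q \<Longrightarrow> C \<noteq> C' \<Longrightarrow> \<not> cross C C'"
  using Qnc unfolding noncrossing_cross by blast

lemma n1:
  assumes C: "C \<in> Q" and C': "C' \<in> Q" and ne: "C \<noteq> C'"
  shows "\<not> cross (Pa C) (Pa C')"
proof
  assume c: "cross (Pa C) (Pa C')"
  have D: "\<And>C. C \<in> Q \<Longrightarrow> Pa C \<subseteq> {z0..<z0+m}"
  proof
    fix C y assume C: "C \<in> Q" and y: "y \<in> Pa C"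
    obtain x where x: "x \<in> C" "y = psi m z0 x" using y unfolding Pa_def by (rule imageE)
    have xr: "x \<in> {1..m}" using Csub[OF C] x by blast
    show "y \<in> {z0..<z0+m}" using psi_range[OF xr z0r] x by simp
  qed
  have h1: "\<And>x y. x \<in> {z0..<z0+m} \<Longrightarrow> y \<in> {z0..<z0+m} \<Longrightarrow> x < y \<Longrightarrow> y < m + 1 \<Longrightarrow> pim m x < pim m y"
    by (simp add: pim_def)
  have h2: "\<And>x y. x \<in> {z0..<z0+m} \<Longrightarrow> y \<in> {z0..<z0+m} \<Longrightarrow> x < y \<Longrightarrow> m + 1 \<le> x \<Longrightarrow> pim m x < pim m y"
    by (simp add: pim_def)
  have h3: "\<And>x y. x \<in> {z0..<z0+m} \<Longrightarrow> y \<in> {z0..<z0+m} \<Longrightarrow> x < m + 1 \<Longrightarrow> m + 1 \<le> y \<Longrightarrow> pim m y < pim m x"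
    by (auto simp: pim_def)
  have "cross (pim m ` Pa C) (pim m ` Pa C') \<or> cross (pim m ` Pa C') (pim m ` Pa C)"
    by (rule cross_shift[OF h1 h2 h3 D[OF C] D[OF C'] c])
  then have "cross C C' \<or> cross C' C" using pim_Pa[OF C] pim_Pa[OF C'] by simp
  then show False using Q_nc[OF C C' ne] Q_nc[OF C' C ne[symmetric]] by blast
qed

lemma z0_PaE: "z0 \<in> Pa E"
proof -
  have "psi m z0 z0 = z0" by (simp add: psi_def)
  then show ?thesis unfolding Pa_def using z0E by (metis imageI)
qed

lemma Zb_win': "x \<in> Zb \<Longrightarrow> z0 < x \<Longrightarrow> x < z0 + m \<Longrightarrow> x \<in> Pa E"
  unfolding Pa_def using Zb_win by simp

lemma n2:
  assumes C: "C \<in> Q" "C \<noteq> E"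
  shows "\<not> cross Zb (Pa C) \<and> \<not> cross (Pa C) Zb"
proof (intro conjI notI)
  assume "cross Zb (Pa C)"
  then obtain a b c d where o: "a<b" "b<c" "c<d" and mm: "a\<in>Zb" "c\<in>Zb" "b\<in>Pa C" "d\<in>Pa C"
    unfolding cross_def by blast
  have "z0 < b" "d < z0 + m" using Pa_range[OF C mm(3)] Pa_range[OF C mm(4)] by simp_all
  then have "c \<in> Pa E" using Zb_win'[OF mm(2)] o by simp
  then have "cross (Pa E) (Pa C)" unfolding cross_def using z0_PaE o mm \<open>z0 < b\<close> by blast
  then show False using n1[OF EQ C(1)] C(2) by metis
next
  assume "cross (Pa C) Zb"
  then obtain a b c d where o: "a<b" "b<c" "c<d" and mm: "a\<in>Pa C" "c\<in>Pa C" "b\<in>Zb" "d\<in>Zb"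
    unfolding cross_def by blast
  have "z0 < a" "c < z0 + m" using Pa_range[OF C mm(1)] Pa_range[OF C mm(2)] by simp_all
  then have "b \<in> Pa E" using Zb_win'[OF mm(3)] o by simp
  then have "cross (Pa E) (Pa C)" unfolding cross_def using z0_PaE o mm \<open>z0 < a\<close> by blast
  then show False using n1[OF EQ C(1)] C(2) by metis
qed

lemma n4:
  assumes C: "C \<in> Q" "C \<noteq> E" and C': "C' \<in> Q" "C' \<noteq> E"
  shows "\<not> cross (Pa C) (Pb C') \<and> \<not> cross (Pb C') (Pa C)"
proof (intro conjI notI)
  assume "cross (Pa C) (Pb C')"
  then obtain a b c d where o: "a<b" "b<c" "c<d" and mm: "a\<in>Pa C" "c\<in>Pa C" "b\<in>Pb C'" "d\<in>Pb C'"
    unfolding cross_def by blast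
  have "z0 < a" "c < z0 + m" using Pa_range[OF C mm(1)] Pa_range[OF C mm(2)] by simp_all
  moreover have "b < z0 \<or> z0 + m < b" using Pb_range[OF C' mm(3)] .
  ultimately show False using o by linarith
next
  assume "cross (Pb C') (Pa C)"
  then obtain a b c d where o: "a<b" "b<c" "c<d" and mm: "a\<in>Pb C'" "c\<in>Pb C'" "b\<in>Pa C" "d\<in>Pa C"
    unfolding cross_def by blast
  have "z0 < b" "d < z0 + m" using Pa_range[OF C mm(3)] Pa_range[OF C mm(4)] by simp_all
  moreover have "c < z0 \<or> z0 + m < c" using Pb_range[OF C' mm(2)] .
  ultimately show False using o by linarith
qed

lemma rot_cross': "X \<in> gq \<Longrightarrow> Y \<in> gq \<Longrightarrow> cross X Y \<Longrightarrow>
   cross (rot m ` X) (rot m ` Y) \<or> cross (rot m ` Y) (rot m ` X)"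
  using rot_cross gq_sub by blast

lemma gq_nc: "noncrossing gq"
  unfolding noncrossing_cross
proof (intro ballI impI notI)
  fix X Y assume X: "X \<in> gq" and Y: "Y \<in> gq" and ne: "X \<noteq> Y" and c: "cross X Y"
  have rc: "cross (rot m ` X) (rot m ` Y) \<or> cross (rot m ` Y) (rot m ` X)" using rot_cross'[OF X Y c] .
  show False
  proof (cases rule: gq_cases[OF X])
    case 1
    then show ?thesis
    proof (cases rule: gq_cases[OF Y])
      case 1 then show ?thesis using \<open>X = Zb\<close> ne by simp
    next
      case (2 C) then show ?thesis using \<open>X = Zb\<close> c n2 by blast
    next
      case (3 C)
      then have "cross Zb (Pa C) \<or> cross (Pa C) Zb" using rc \<open>X = Zb\<close> rot_Zb rot_Pb by simp
      then show ?thesis using n2[OF 3(1,2)] by blast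
    qed
  next
    case (2 C)
    then show ?thesis
    proof (cases rule: gq_cases[OF Y])
      case 1 then show ?thesis using 2 c n2 by blast
    next
      case (2 C')
      then have "C \<noteq> C'" using ne \<open>X = Pa C\<close> by blast
      then show ?thesis using n1 c 2 \<open>X = Pa C\<close> \<open>C \<in> Q\<close> by blast
    next
      case (3 C') then show ?thesis using 2 c n4 by blast
    qed
  next
    case (3 C)
    then show ?thesis
    proof (cases rule: gq_cases[OF Y])
      case 1
      then have "cross (Pa C) Zb \<or> cross Zb (Pa C)" using rc 3 rot_Zb rot_Pb by simp
      then show ?thesis using n2[OF 3(1,2)] by blast
    next
      case (2 C') then show ?thesis using 3 c n4 by blast
    next
      case (3 C')
      have CC: "C \<noteq> C'" using ne \<open>X = Pb C\<close> 3 by blast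
      have "cross (Pa C) (Pa C') \<or> cross (Pa C') (Pa C)" using rc \<open>X = Pb C\<close> 3 rot_Pb \<open>C \<in> Q\<close> by simp
      then show ?thesis using n1[OF \<open>C \<in> Q\<close> 3(1) CC] n1[OF 3(1) \<open>C \<in> Q\<close> CC[symmetric]] by blast
    qed
  qed
qed

lemma gq_NC:
  assumes mk: "m = k * (2*n+1)" and k: "0 < k" and dv: "\<forall>C\<in>Q. C \<noteq> E \<longrightarrow> (2*k) dvd card C"
  shows "gq \<in> NC_tilde k n"
proof -
  have fin: "finite Q \<and> (\<forall>C\<in>Q. finite C)" using part_finite[OF Qp] by simp
  have "card (\<Union>Q) mod (2*k) = card E mod (2*k)"
    using card_Union_mod[OF conjunct1[OF fin] conjunct2[OF fin] partition_onD2[OF Qp] EQ dv] .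
  moreover have "\<Union>Q = {1..m}" using partition_onD1[OF Qp] by simp
  moreover have "m mod (2*k) = k"
  proof -
    have "m = k + n * (2*k)" using mk by (simp add: algebra_simps)
    then have "m mod (2*k) = k mod (2*k)" by simp
    also have "\<dots> = k" using k by simp
    finally show ?thesis .
  qed
  ultimately have Emod: "card E mod (2*k) = k" by simp
  have "card E = card E div (2*k) * (2*k) + k" using div_mult_mod_eq[of "card E" "2*k"] Emod by simp
  then have "2 * card E = (2*k) * (2 * (card E div (2*k)) + 1)" by (simp add: algebra_simps)
  then have dZ: "(2*k) dvd card Zb" using card_Zb by simp
  have dvall: "\<forall>X\<in>gq. (2*k) dvd card X"
  proof
    fix X assume X: "X \<in> gq"
    show "(2*k) dvd card X"
    proof (cases rule: gq_cases[OF X])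
      case 1 then show ?thesis using dZ by simp
    next
      case (2 C) then show ?thesis using card_Pa dv by simp
    next
      case (3 C) then show ?thesis using card_Pb dv by simp
    qed
  qed
  show ?thesis unfolding NC_tilde_def Let_def mk[symmetric]
    using gq_part gq_nc dvall gq_rot by blast
qed

end



lemma refines_refl: "refines P P"
  unfolding refines_def by (metis Sup_insert ccpo_Sup_singleton empty_subsetI insert_subset sup_bot.right_neutral)

lemma part_antisym:
  assumes A: "partition_on A P" "partition_on A P'" and r: "refines P P'" "refines P' P"
  shows "P = P'"
proof -
  have r1: "\<forall>B\<in>P. \<exists>B'\<in>P'. B \<subseteq> B'" using refines_part[OF A] r(1) by blast
  have r2: "\<forall>B\<in>P'. \<exists>B'\<in>P. B \<subseteq> B'" using refines_part[OF A(2) A(1)] r(2) by blast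
  have sub: "X \<subseteq> Y"
    if AX: "partition_on A X" and AY: "partition_on A Y"
      and rX: "\<forall>B\<in>X. \<exists>B'\<in>Y. B \<subseteq> B'" and rY: "\<forall>B\<in>Y. \<exists>B'\<in>X. B \<subseteq> B'" for X Y
  proof
    fix B assume B: "B \<in> X"
    obtain B' where B': "B' \<in> Y" "B \<subseteq> B'" using rX B by blast
    obtain B'' where B'': "B'' \<in> X" "B' \<subseteq> B''" using rY B' by blast
    obtain x where x: "x \<in> B" using part_ne[OF AX B] by blast
    have "B'' = B" using part_unique[OF AX B''(1) B] x B' B'' by blast
    then have "B' = B" using B' B'' by blast
    then show "B \<in> Y" using B' by simp
  qed
  show ?thesis using sub[OF A r1 r2] sub[OF A(2) A(1) r2 r1] by blast
qed

theorem theorem6p1: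
  fixes n k :: nat
  assumes "0 < n" and "0 < k"
  shows "refinement_posets_iso (NC_tilde k n) (NC_r (2 * k) n k)"
proof -
  define m where "m = k * (2*n+1)"
  have mpos: "0 < m" using assms(2) unfolding m_def by simp
  interpret half m using mpos by unfold_locales
  have k: "0 < k" using assms(2) .
  have Tiff: "\<And>P. P \<in> NC_tilde k n \<longleftrightarrow> TP m P \<and> (\<forall>B\<in>P. (2*k) dvd card B)"
    unfolding NC_tilde_def TP_def Let_def m_def by auto
  have e: "2 * k * n + k = m" unfolding m_def by (simp add: algebra_simps)
  have Riff: "\<And>Q. Q \<in> NC_r (2*k) n k \<longleftrightarrow> partition_on {1..m} Q \<and> noncrossing Q \<and>
      (\<exists>E\<in>Q. \<forall>C\<in>Q. C \<noteq> E \<longrightarrow> (2*k) dvd card C)"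
    unfolding NC_r_def e by simp
  have mk: "m = k * (2*n+1)" unfolding m_def ..
  have refl_inv: "refines P1 P2"
    if P1: "P1 \<in> NC_tilde k n" and P2: "P2 \<in> NC_tilde k n" and r: "refines (fq m P1) (fq m P2)" for P1 P2
    using fq_reflect[of P1 P2 k n] P1 P2 r Tiff mk k by blast
  have inj: "inj_on (fq m) (NC_tilde k n)"
  proof (rule inj_onI)
    fix P1 P2 assume P1: "P1 \<in> NC_tilde k n" and P2: "P2 \<in> NC_tilde k n" and eq: "fq m P1 = fq m P2"
    have "refines P1 P2" using refl_inv[OF P1 P2] eq refines_refl by metis
    moreover have "refines P2 P1" using refl_inv[OF P2 P1] eq refines_refl by metis
    ultimately show "P1 = P2" using part_antisym TP_part P1 P2 Tiff by blast
  qed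
  have img: "fq m ` NC_tilde k n = NC_r (2*k) n k"
  proof
    show "fq m ` NC_tilde k n \<subseteq> NC_r (2*k) n k"
      using fq_NCr[OF _ _ mk k] Tiff by blast
  next
    show "NC_r (2*k) n k \<subseteq> fq m ` NC_tilde k n"
    proof
      fix Q assume Q: "Q \<in> NC_r (2*k) n k"
      then have Qp: "partition_on {1..m} Q" and Qnc: "noncrossing Q" using Riff by blast+
      obtain E where E: "E \<in> Q" and dv: "\<forall>C\<in>Q. C \<noteq> E \<longrightarrow> (2*k) dvd card C" using Q Riff by blast
      interpret I: inv m Q E using mpos Qp Qnc E by unfold_locales
      have "I.gq \<in> NC_tilde k n" using I.gq_NC[OF mk k dv] .
      moreover have "fq m I.gq = Q" using I.fq_gq .
      ultimately show "Q \<in> fq m ` NC_tilde k n" by (metis image_eqI)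
    qed
  qed
  have ord: "\<forall>x\<in>NC_tilde k n. \<forall>y\<in>NC_tilde k n. refines x y \<longleftrightarrow> refines (fq m x) (fq m y)"
    using refl_inv fq_mono by blast
  show ?thesis unfolding refinement_posets_iso_def bij_betw_def
    using inj img ord by blast
qed




end
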